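(* Let $(\mathcal S,\mathcal F,\mu,\prec)$ be an ordered probability space and let $g(x)=\mu\{z\in\mathcal S:z\prec x\}$. Then the set $\{(x,y)\in\mathcal S^2:x\prec y\text{ and }g(x)\ge g(y)\}$ is a $\mu\times\mu$-null set in $\mathcal S^2$.
   Context: An ordered probability space $(\mathcal S,\mathcal F,\mu,\prec)$ is a probability space $(\mathcal S,\mathcal F,\mu)$ equipped with a strict partial order $\prec$ on $\mathcal S$ such that $\{(x,y):x\prec y\}$ belongs to the product $\sigma$-field $\mathcal F\times\mathcal F$. *)

theory Defs
  imports "HOL-Probability.Probability"
begin

definition ordered_prob_space :: "'a measure \<Rightarrow> ('a \<Rightarrow> 'a \<Rightarrow> bool) \<Rightarrow> bool" where
  "ordered_prob_space M prec \<longleftrightarrow>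
     prob_space M \<and>
     (\<forall>x\<in>space M. \<not> prec x x) \<and>
     (\<forall>x\<in>space M. \<forall>y\<in>space M. \<forall>z\<in>space M. prec x y \<longrightarrow> prec y z \<longrightarrow> prec x z) \<and>
     {(x, y) \<in> space M \<times> space M. prec x y} \<in> sets (M \<Otimes>\<^sub>M M)"

end

theory Submission
  imports Defs
begin

lemma sq_aux: fixes x :: ennreal and m :: real
  assumes ineq: "x * x + x * x \<le> x * x" and em: "x = ennreal m" and m0: "0 \<le> m"
  shows "m = 0"
proof -
  have e: "x * x = ennreal (m*m)" using em m0 by (simp add: ennreal_mult)
  have "ennreal (m*m + m*m) \<le> ennreal (m*m)" using ineq unfolding e using m0 by (simp add: ennreal_plus[symmetric])
  hence "m * m + m * m \<le> m * m" using m0 by simp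
  hence "m * m \<le> 0" by linarith
  thus "m = 0" using m0 mult_le_0_iff[of m m] by auto
qed

theorem lemma5p3:
  fixes M :: "'a measure" and prec :: "'a \<Rightarrow> 'a \<Rightarrow> bool" and g :: "'a \<Rightarrow> real"
  assumes "ordered_prob_space M prec"
    and "\<And>x. g x = measure M {z \<in> space M. prec z x}"
  shows "{(x, y) \<in> space M \<times> space M. prec x y \<and> g x \<ge> g y} \<in> null_sets (M \<Otimes>\<^sub>M M)"
proof -
  have ps: "prob_space M" and irr: "\<And>x. x \<in> space M \<Longrightarrow> \<not> prec x x"
    and tr: "\<And>x y z. x \<in> space M \<Longrightarrow> y \<in> space M \<Longrightarrow> z \<in> space M \<Longrightarrow> prec x y \<Longrightarrow> prec y z \<Longrightarrow> prec x z"
    and P: "{(x, y) \<in> space M \<times> space M. prec x y} \<in> sets (M \<Otimes>\<^sub>M M)"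
    using assms(1) unfolding ordered_prob_space_def by blast+
  interpret prob_space M by (rule ps)
  interpret pp: pair_prob_space M M by unfold_locales
  define Pr where "Pr = {(x, y) \<in> space M \<times> space M. prec x y}"
  have PrS: "Pr \<in> sets (M \<Otimes>\<^sub>M M)" using P by (simp add: Pr_def)
  have sec: "(\<lambda>x. (x, y)) -` Pr = {z \<in> space M. prec z y}" if "y \<in> space M" for y
    using that by (auto simp: Pr_def)
  have Lsets: "{z \<in> space M. prec z y} \<in> sets M" if "y \<in> space M" for y
  proof -
    have "(\<lambda>x. (x, y)) -` Pr = (\<lambda>x. (x, y)) -` Pr \<inter> space M" using sec[OF that] by auto
    also have "\<dots> \<in> sets M"
      using PrS that by (intro measurable_sets[OF _ PrS]) measurable
    finally show ?thesis using sec[OF that] by simp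
  qed
  have gm: "g \<in> borel_measurable M"
  proof -
    have "(\<lambda>y. enn2real (emeasure M ((\<lambda>x. (x, y)) -` Pr))) \<in> borel_measurable M"
      using pp.measurable_emeasure_Pair2[OF PrS] by measurable
    moreover have "\<And>y. y \<in> space M \<Longrightarrow> enn2real (emeasure M ((\<lambda>x. (x, y)) -` Pr)) = g y"
      using sec assms(2) by (simp add: measure_def)
    ultimately show ?thesis by (metis (no_types, lifting) measurable_cong)
  qed
  define A where "A = {(x, y) \<in> space M \<times> space M. prec x y \<and> g x \<ge> g y}"
  have AS: "A \<in> sets (M \<Otimes>\<^sub>M M)"
  proof -
    have "A = Pr \<inter> {p \<in> space (M \<Otimes>\<^sub>M M). g (snd p) \<le> g (fst p)}"
      by (auto simp: A_def Pr_def space_pair_measure)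
    also have "\<dots> \<in> sets (M \<Otimes>\<^sub>M M)" using PrS gm by measurable
    finally show ?thesis .
  qed
  have key: "emeasure M {x \<in> space M. prec x y \<and> g y \<le> g x} = 0" if y: "y \<in> space M" for y
  proof -
    define B where "B = {x \<in> space M. prec x y \<and> g y \<le> g x}"
    have BS: "B \<in> sets M"
    proof -
      have "B = {x \<in> space M. prec x y} \<inter> {x \<in> space M. g y \<le> g x}" by (auto simp: B_def)
      moreover have "{x \<in> space M. g y \<le> g x} \<in> sets M" using gm by measurable
      ultimately show ?thesis using Lsets[OF y] by auto
    qed
    have Bsp: "B \<subseteq> space M" by (auto simp: B_def)
    have full: "emeasure M {x' \<in> B. prec x' x} = emeasure M B" if x: "x \<in> B" for x
    proof -
      have xs: "x \<in> space M" "prec x y" "g y \<le> g x" using x by (auto simp: B_def)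
      have sub: "{z \<in> space M. prec z x} \<subseteq> {z \<in> space M. prec z y}"
        using tr xs y by blast
      have "measure M ({z \<in> space M. prec z y} - {z \<in> space M. prec z x})
          = measure M {z \<in> space M. prec z y} - measure M {z \<in> space M. prec z x}"
        using sub Lsets xs y by (intro finite_measure_Diff) auto
      also have "\<dots> \<le> 0" using xs(3) assms(2) by simp
      finally have "measure M ({z \<in> space M. prec z y} - {z \<in> space M. prec z x}) = 0"
        using measure_nonneg by (metis order_antisym)
      hence nul: "({z \<in> space M. prec z y} - {z \<in> space M. prec z x}) \<in> null_sets M"
        using Lsets[of x] Lsets[of y] xs y by (auto simp: null_sets_def emeasure_eq_measure)
      have CS: "{x' \<in> B. prec x' x} \<in> sets M"
      proof -
        have "{x' \<in> B. prec x' x} = B \<inter> {z \<in> space M. prec z x}" using Bsp by auto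
        thus ?thesis using BS Lsets[OF xs(1)] by auto
      qed
      have sb: "B - {x' \<in> B. prec x' x} \<subseteq> {z \<in> space M. prec z y} - {z \<in> space M. prec z x}"
        by (auto simp: B_def)
      have ND: "B - {x' \<in> B. prec x' x} \<in> null_sets M"
        by (rule null_sets_subset[OF nul _ sb]) (use BS CS in auto)
      have eqB: "{x' \<in> B. prec x' x} \<union> (B - {x' \<in> B. prec x' x}) = B" by blast
      show ?thesis using emeasure_Un_null_set[OF CS ND] unfolding eqB by simp
    qed
    define R1 where "R1 = {p \<in> B \<times> B. prec (snd p) (fst p)}"
    define R2 where "R2 = {p \<in> B \<times> B. prec (fst p) (snd p)}"
    have BB: "B \<times> B \<in> sets (M \<Otimes>\<^sub>M M)" using BS by auto
    have R2S: "R2 \<in> sets (M \<Otimes>\<^sub>M M)"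
    proof -
      have "R2 = (B \<times> B) \<inter> Pr" using Bsp by (auto simp: R2_def Pr_def)
      thus ?thesis using BB PrS by auto
    qed
    have R1S: "R1 \<in> sets (M \<Otimes>\<^sub>M M)"
    proof -
      have "R1 = (B \<times> B) \<inter> ((\<lambda>p. (snd p, fst p)) -` Pr \<inter> space (M \<Otimes>\<^sub>M M))"
        using Bsp by (auto simp: R1_def Pr_def space_pair_measure)
      moreover have "(\<lambda>p. (snd p, fst p)) -` Pr \<inter> space (M \<Otimes>\<^sub>M M) \<in> sets (M \<Otimes>\<^sub>M M)"
        by (rule measurable_sets[OF _ PrS]) measurable
      ultimately show ?thesis using BB by auto
    qed
    have e1: "emeasure (M \<Otimes>\<^sub>M M) R1 = emeasure M B * emeasure M B"
    proof -
      have "emeasure (M \<Otimes>\<^sub>M M) R1 = (\<integral>\<^sup>+x. emeasure M (Pair x -` R1) \<partial>M)"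
        by (rule emeasure_pair_measure_alt[OF R1S])
      also have "\<dots> = (\<integral>\<^sup>+x. emeasure M B * indicator B x \<partial>M)"
      proof (rule nn_integral_cong)
        fix x assume "x \<in> space M"
        show "emeasure M (Pair x -` R1) = emeasure M B * indicator B x"
        proof (cases "x \<in> B")
          case True
          have "Pair x -` R1 = {x' \<in> B. prec x' x}" using True by (auto simp: R1_def)
          thus ?thesis using full[OF True] True by simp
        next
          case False
          have "Pair x -` R1 = {}" using False by (auto simp: R1_def)
          thus ?thesis using False by simp
        qed
      qed
      also have "\<dots> = emeasure M B * emeasure M B"
        using BS by (simp add: nn_integral_cmult_indicator)
      finally show ?thesis .
    qed
    have e2: "emeasure (M \<Otimes>\<^sub>M M) R2 = emeasure M B * emeasure M B"
    proof -
      have "emeasure (M \<Otimes>\<^sub>M M) R2 = (\<integral>\<^sup>+x. emeasure M ((\<lambda>z. (z, x)) -` R2) \<partial>M)"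
        by (rule pp.emeasure_pair_measure_alt2[OF R2S])
      also have "\<dots> = (\<integral>\<^sup>+x. emeasure M B * indicator B x \<partial>M)"
      proof (rule nn_integral_cong)
        fix x assume "x \<in> space M"
        show "emeasure M ((\<lambda>z. (z, x)) -` R2) = emeasure M B * indicator B x"
        proof (cases "x \<in> B")
          case True
          have "(\<lambda>z. (z, x)) -` R2 = {x' \<in> B. prec x' x}" using True by (auto simp: R2_def)
          thus ?thesis using full[OF True] True by simp
        next
          case False
          have "(\<lambda>z. (z, x)) -` R2 = {}" using False by (auto simp: R2_def)
          thus ?thesis using False by simp
        qed
      qed
      also have "\<dots> = emeasure M B * emeasure M B"
        using BS by (simp add: nn_integral_cmult_indicator)
      finally show ?thesis .
    qed
    have disj: "R1 \<inter> R2 = {}"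
      using tr irr Bsp by (fastforce simp: R1_def R2_def)
    have "emeasure (M \<Otimes>\<^sub>M M) R1 + emeasure (M \<Otimes>\<^sub>M M) R2 = emeasure (M \<Otimes>\<^sub>M M) (R1 \<union> R2)"
      using disj R1S R2S by (intro plus_emeasure) auto
    also have "\<dots> \<le> emeasure (M \<Otimes>\<^sub>M M) (B \<times> B)"
      using BB by (intro emeasure_mono) (auto simp: R1_def R2_def)
    also have "\<dots> = emeasure M B * emeasure M B"
      by (rule emeasure_pair_measure_Times[OF BS BS])
    finally have ineq: "emeasure M B * emeasure M B + emeasure M B * emeasure M B \<le> emeasure M B * emeasure M B"
      by (simp only: e1 e2)
    define m where "m = measure M B"
    have em: "emeasure M B = ennreal m" unfolding m_def by (rule emeasure_eq_measure)
    have m0: "0 \<le> m" unfolding m_def by (rule measure_nonneg)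
    have "m = 0" by (rule sq_aux[OF ineq em m0])
    hence "emeasure M B = 0" using em by simp
    thus ?thesis unfolding B_def .
  qed
  have "emeasure (M \<Otimes>\<^sub>M M) A = (\<integral>\<^sup>+y. emeasure M ((\<lambda>x. (x, y)) -` A) \<partial>M)"
    by (rule pp.emeasure_pair_measure_alt2[OF AS])
  also have "\<dots> = (\<integral>\<^sup>+y. 0 \<partial>M)"
  proof (rule nn_integral_cong)
    fix y assume y: "y \<in> space M"
    have "(\<lambda>x. (x, y)) -` A = {x \<in> space M. prec x y \<and> g y \<le> g x}" using y by (auto simp: A_def)
    thus "emeasure M ((\<lambda>x. (x, y)) -` A) = 0" using key[OF y] by simp
  qed
  finally have "A \<in> null_sets (M \<Otimes>\<^sub>M M)" using AS by (simp add: null_sets_def)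
  thus ?thesis unfolding A_def .
qed

end
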